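(* Let $n\ge 1$ and let $\Gamma$ be the equioriented quiver $1\to 2\to\cdots\to n$ of type $A_n$. For $1\le i\le j\le n$ and $1\le k\le \ell\le n$, we have $M[i,j]\le M[k,\ell]$ if and only if there exists an oriented (connected) path from the vertex of $M[k,\ell]$ to the vertex of $M[i,j]$ in the Auslander--Reiten quiver of $\Gamma$. In particular, a $\Gamma$-representation $M$ is catenoid if and only if the set of its pairwise non-isomorphic indecomposable direct summands is totally ordered with respect to $\le$.
   Context: Representations are finite-dimensional over $\mathbb{C}$. For $1\le i\le j\le n$, $M[i,j]$ denotes the indecomposable $\Gamma$-representation with $\mathbb{C}$ at the vertices $i,\dots,j$, zero elsewhere, and identity maps along arrows between vertices in $[i,j]$; every indecomposable is isomorphic to exactly one $M[i,j]$. The partial order $\le$ is defined by $M[i,j]\le M[k,\ell]$ iff $i\le k$ and $j\le \ell$. The Auslander--Reiten quiver of $\Gamma$ has vertices the pairs $(i,j)$, $1\le i\le j\le n$ (the vertex $(i,j)$ corresponding to $M[i,j]$), and arrows $(i,j)\to(i-1,j)$ and $(i,j)\to(i,j-1)$ whenever the target is a valid pair. A representation $M$ is called catenoid if all its distinct (pairwise non-isomorphic) indecomposable direct summands lie on a single oriented connected path of the Auslander--Reiten quiver. *)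

theory Defs
  imports Main "HOL-Library.Multiset"
begin

text \<open>Indecomposable representations of the equioriented A_n quiver are indexed by
  pairs (i,j) with 1 <= i <= j <= n (M[i,j]). A representation, up to isomorphism,
  is recorded (Krull-Schmidt) by the multiset of its indecomposable summands.\<close>

definition valid_pair :: "nat \<Rightarrow> nat \<times> nat \<Rightarrow> bool" where
  "valid_pair n v \<longleftrightarrow> 1 \<le> fst v \<and> fst v \<le> snd v \<and> snd v \<le> n"

definition ind_le :: "nat \<times> nat \<Rightarrow> nat \<times> nat \<Rightarrow> bool" where
  "ind_le v w \<longleftrightarrow> fst v \<le> fst w \<and> snd v \<le> snd w"

definition ar_arrow :: "nat \<Rightarrow> nat \<times> nat \<Rightarrow> nat \<times> nat \<Rightarrow> bool" where
  "ar_arrow n v w \<longleftrightarrow> valid_pair n v \<and> valid_pair n w \<and>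
     (w = (fst v - 1, snd v) \<or> w = (fst v, snd v - 1))"

definition ar_path :: "nat \<Rightarrow> (nat \<times> nat) list \<Rightarrow> bool" where
  "ar_path n p \<longleftrightarrow> p \<noteq> [] \<and> (\<forall>v\<in>set p. valid_pair n v) \<and>
     (\<forall>k. Suc k < length p \<longrightarrow> ar_arrow n (p ! k) (p ! Suc k))"

definition is_rep :: "nat \<Rightarrow> (nat \<times> nat) multiset \<Rightarrow> bool" where
  "is_rep n M \<longleftrightarrow> (\<forall>v\<in>#M. valid_pair n v)"

definition catenoid :: "nat \<Rightarrow> (nat \<times> nat) multiset \<Rightarrow> bool" where
  "catenoid n M \<longleftrightarrow> (\<exists>p. ar_path n p \<and> set_mset M \<subseteq> set p)"

definition totally_ordered_le :: "(nat \<times> nat) set \<Rightarrow> bool" where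
  "totally_ordered_le S \<longleftrightarrow> (\<forall>v\<in>S. \<forall>w\<in>S. ind_le v w \<or> ind_le w v)"

end

theory Submission
  imports Defs
begin

lemma arrow_le: "ar_arrow n v w \<Longrightarrow> ind_le w v"
  by (auto simp: ar_arrow_def ind_le_def)

lemma path_le:
  assumes "ar_path n p" "a \<le> b" "b < length p"
  shows "ind_le (p!b) (p!a)"
  using assms(2,3)
proof (induction b)
  case 0 then show ?case by (simp add: ind_le_def)
next
  case (Suc b)
  show ?case
  proof (cases "a = Suc b")
    case True then show ?thesis by (simp add: ind_le_def)
  next
    case False
    then have "a \<le> b" using Suc by simp
    then have "ind_le (p!b) (p!a)" using Suc by simp
    moreover have "ind_le (p!Suc b) (p!b)"
      using assms(1) Suc.prems arrow_le unfolding ar_path_def by blast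
    ultimately show ?thesis by (auto simp: ind_le_def)
  qed
qed

lemma path_single: "valid_pair n v \<Longrightarrow> ar_path n [v]"
  by (simp add: ar_path_def)

lemma path_cons:
  assumes "ar_path n p" "ar_arrow n v (hd p)"
  shows "ar_path n (v # p)"
proof -
  have ne: "p \<noteq> []" using assms(1) by (simp add: ar_path_def)
  have "valid_pair n v" using assms(2) by (simp add: ar_arrow_def)
  moreover have "\<forall>k. Suc k < length (v#p) \<longrightarrow> ar_arrow n ((v#p) ! k) ((v#p) ! Suc k)"
  proof (intro allI impI)
    fix k assume k: "Suc k < length (v#p)"
    show "ar_arrow n ((v#p) ! k) ((v#p) ! Suc k)"
    proof (cases k)
      case 0 then show ?thesis using assms(2) ne by (simp add: hd_conv_nth)
    next
      case (Suc m) then show ?thesis using assms(1) k unfolding ar_path_def by simp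
    qed
  qed
  ultimately show ?thesis using assms(1) unfolding ar_path_def by auto
qed

lemma path_append:
  assumes "ar_path n p" "ar_path n q" "last p = hd q"
  shows "ar_path n (p @ tl q)"
  using assms
proof (induction p)
  case Nil then show ?case by (simp add: ar_path_def)
next
  case (Cons x p)
  show ?case
  proof (cases "p = []")
    case True
    then have "q \<noteq> []" "hd q = x" using Cons by (auto simp: ar_path_def)
    then have "q = x # tl q" by (metis list.collapse)
    then show ?thesis using True Cons.prems by simp
  next
    case False
    have pp: "ar_path n p" using Cons.prems(1) False unfolding ar_path_def
      by (auto simp: nth_Cons_Suc)
    have ar: "ar_arrow n x (hd p)" using Cons.prems(1) False unfolding ar_path_def
      by (metis hd_conv_nth length_Cons length_greater_0_conv nth_Cons_0 nth_Cons_Suc Suc_less_eq)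
    have "ar_path n (p @ tl q)" using Cons.IH pp Cons.prems False by simp
    moreover have "hd (p @ tl q) = hd p" using False by simp
    ultimately show ?thesis using path_cons ar by fastforce
  qed
qed

lemma path_exists:
  assumes "valid_pair n (i,j)" "valid_pair n (k,l)" "ind_le (i,j) (k,l)"
  shows "\<exists>p. ar_path n p \<and> hd p = (k,l) \<and> last p = (i,j)"
  using assms
proof (induction "(k - i) + (l - j)" arbitrary: k l rule: less_induct)
  case less
  show ?case
  proof (cases "i < k")
    case True
    have v: "valid_pair n (k-1,l)" using less.prems True by (auto simp: valid_pair_def ind_le_def)
    have "ind_le (i,j) (k-1,l)" using less.prems True by (auto simp: ind_le_def)
    moreover have "(k - 1 - i) + (l - j) < (k - i) + (l - j)" using True by simp
    ultimately obtain p where p: "ar_path n p" "hd p = (k-1,l)" "last p = (i,j)"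
      using less.hyps[of "k-1" l] v less.prems by blast
    have "ar_arrow n (k,l) (hd p)" using p v less.prems by (simp add: ar_arrow_def)
    then have "ar_path n ((k,l)#p)" using path_cons p by blast
    moreover have "p \<noteq> []" using p by (simp add: ar_path_def)
    ultimately show ?thesis using p by auto
  next
    case False
    then have ki: "k = i" using less.prems by (simp add: ind_le_def)
    show ?thesis
    proof (cases "j < l")
      case True
      have v: "valid_pair n (k,l-1)" using less.prems True ki by (auto simp: valid_pair_def ind_le_def)
      have "ind_le (i,j) (k,l-1)" using less.prems True ki by (auto simp: ind_le_def)
      moreover have "(k - i) + (l - 1 - j) < (k - i) + (l - j)" using True by simp
      ultimately obtain p where p: "ar_path n p" "hd p = (k,l-1)" "last p = (i,j)"
        using less.hyps[of k "l-1"] v less.prems by blast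
      have "ar_arrow n (k,l) (hd p)" using p v less.prems by (simp add: ar_arrow_def)
      then have "ar_path n ((k,l)#p)" using path_cons p by blast
      moreover have "p \<noteq> []" using p by (simp add: ar_path_def)
      ultimately show ?thesis using p by auto
    next
      case False
      then have "l = j" using less.prems by (simp add: ind_le_def)
      then show ?thesis using ki less.prems path_single by fastforce
    qed
  qed
qed

lemma cover:
  assumes "finite S" "S \<noteq> {}" "\<forall>v\<in>S. valid_pair n v" "totally_ordered_le S"
  shows "\<exists>p. ar_path n p \<and> S \<subseteq> set p \<and> last p \<in> S"
  using assms
proof (induction S rule: finite_psubset_induct)
  case (psubset S)
  define f where "f = (\<lambda>v::nat\<times>nat. fst v + snd v)"
  obtain m where m: "m \<in> S" "\<forall>v\<in>S. f m \<le> f v"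
  proof -
    have "Min (f ` S) \<in> f ` S" using psubset.prems psubset.hyps by simp
    then obtain m where "m \<in> S" "f m = Min (f ` S)" by auto
    then show ?thesis using that psubset.hyps by auto
  qed
  have mle: "\<forall>v\<in>S. ind_le m v"
  proof
    fix v assume v: "v \<in> S"
    have "ind_le m v \<or> ind_le v m" using psubset.prems(3) m v by (simp add: totally_ordered_le_def)
    moreover have "ind_le v m \<Longrightarrow> v = m" using m v unfolding f_def ind_le_def
      by (cases v, cases m) auto
    ultimately show "ind_le m v" by (auto simp: ind_le_def)
  qed
  show ?case
  proof (cases "S - {m} = {}")
    case True
    then have "S = {m}" using m by auto
    then show ?thesis using path_single[of n m] psubset.prems by auto
  next
    case False
    have "S - {m} \<subset> S" using m by auto
    moreover have "totally_ordered_le (S - {m})" using psubset.prems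
      by (simp add: totally_ordered_le_def)
    ultimately obtain p where p: "ar_path n p" "S - {m} \<subseteq> set p" "last p \<in> S - {m}"
      using psubset.IH[of "S - {m}"] False psubset.prems by auto
    obtain q where q: "ar_path n q" "hd q = last p" "last q = m"
      using path_exists[of n "fst m" "snd m" "fst (last p)" "snd (last p)"] mle p psubset.prems m
      by auto
    have pq: "ar_path n (p @ tl q)" using path_append p q by auto
    have qne: "q \<noteq> []" using q by (simp add: ar_path_def)
    have "last (p @ tl q) = m"
    proof (cases "tl q = []")
      case True
      have "q = hd q # tl q" using qne by simp
      then have "q = [hd q]" using True by simp
      then have "last q = hd q" by (metis last.simps)
      then show ?thesis using q True p by simp
    next
      case False
      have "q = hd q # tl q" using qne by simp
      then have "last q = last (tl q)" using False by (metis last.simps)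
      then show ?thesis using q False by simp
    qed
    moreover have "S \<subseteq> set (p @ tl q)"
    proof -
      have "m \<in> set (p @ tl q)" using calculation pq last_in_set[of "p @ tl q"]
        by (auto simp: ar_path_def)
      then show ?thesis using p(2) by auto
    qed
    ultimately have "ar_path n (p @ tl q) \<and> S \<subseteq> set (p @ tl q) \<and> last (p @ tl q) \<in> S"
      using pq m by simp
    then show ?thesis by blast
  qed
qed

theorem lemma1p2:
  fixes n :: nat
  assumes "1 \<le> n"
  shows "(\<forall>i j k l. valid_pair n (i, j) \<longrightarrow> valid_pair n (k, l) \<longrightarrow>
            (ind_le (i, j) (k, l) \<longleftrightarrow>
             (\<exists>p. ar_path n p \<and> hd p = (k, l) \<and> last p = (i, j))))
       \<and> (\<forall>M. is_rep n M \<longrightarrow> (catenoid n M \<longleftrightarrow> totally_ordered_le (set_mset M)))"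
proof (intro conjI allI impI iffI)
  fix i j k l
  assume "valid_pair n (i, j)" "valid_pair n (k, l)" "ind_le (i, j) (k, l)"
  then show "\<exists>p. ar_path n p \<and> hd p = (k, l) \<and> last p = (i, j)" using path_exists by blast
next
  fix i j k l
  assume "\<exists>p. ar_path n p \<and> hd p = (k, l) \<and> last p = (i, j)"
  then obtain p where p: "ar_path n p" "hd p = (k, l)" "last p = (i, j)" by blast
  then have ne: "p \<noteq> []" by (simp add: ar_path_def)
  have "ind_le (p ! (length p - 1)) (p ! 0)" using path_le[OF p(1), of 0 "length p - 1"] ne by simp
  then show "ind_le (i, j) (k, l)" using p ne by (simp add: hd_conv_nth last_conv_nth)
next
  fix M assume "is_rep n M" "catenoid n M"
  then obtain p where p: "ar_path n p" "set_mset M \<subseteq> set p" by (auto simp: catenoid_def)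
  show "totally_ordered_le (set_mset M)" unfolding totally_ordered_le_def
  proof (intro ballI)
    fix v w assume "v \<in> set_mset M" "w \<in> set_mset M"
    then obtain a b where ab: "a < length p" "b < length p" "p!a = v" "p!b = w"
      using p by (meson in_set_conv_nth subsetD)
    show "ind_le v w \<or> ind_le w v"
    proof (cases "a \<le> b")
      case True then show ?thesis using path_le[OF p(1) True ab(2)] ab by simp
    next
      case False then show ?thesis using path_le[OF p(1), of b a] ab by simp
    qed
  qed
next
  fix M assume r: "is_rep n M" and t: "totally_ordered_le (set_mset M)"
  show "catenoid n M"
  proof (cases "set_mset M = {}")
    case True
    have "valid_pair n (1,1)" using assms by (simp add: valid_pair_def)
    then show ?thesis using True path_single unfolding catenoid_def by blast
  next
    case False
    then show ?thesis using cover[of "set_mset M" n] r t unfolding catenoid_def is_rep_def by auto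
  qed
qed

end
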